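(* Let $(u_k)_{k\ge1}$ be defined by $u_k=k$ for $k\in\{1,2,3\}$ and $u_k=2u_{k-2}$ for $k\ge4$. For $k\ge1$, let $\omega_k$ be the largest integer such that every 1-dimensional error pattern at level $k$ with at most $\omega_k$ edges is decoded correctly by the 1-dimensional renormalisation decoder. Then $\omega_k=u_k-1$ for all $k\ge1$.
   Context: 1-dimensional model. For $j\ge0$, the line at level $j$ is the cycle with vertex set $\mathbb{Z}/2^j\mathbb{Z}$ and edges $\epsilon_v=\{v,v+1\}$, $v\in\mathbb{Z}/2^j\mathbb{Z}$ (for $j=0$ it is a single vertex with one loop edge). A 1-dimensional error pattern at level $j$ is a subset of these edges; its weight is its number of edges; its syndrome is the set of vertices incident to an odd number of its edges (a loop counts twice). At level $j+1$, the blocks are the pairs consisting of the left edge $\{2m,2m+1\}$ and right edge $\{2m+1,2m+2\}$, $m\in\mathbb{Z}/2^j\mathbb{Z}$; block $m$ corresponds to edge $\{m,m+1\}$ at level $j$. One reduction stage applied to a pattern $\mathbf{f}$ at level $j+1$ with syndrome $S$: (a) for every block, if both endpoints $2m+1,2m+2$ of its right edge are in $S$, flip (add mod 2) the right edge and remove both vertices from $S$; (b) then, for every block, if its middle vertex $2m+1$ is still in $S$, flip its left edge. In the resulting pattern $\mathbf{f}'$ each block contains $0$ or $2$ edges; the image of $\mathbf{f}$ is the pattern at level $j$ containing edge $\{m,m+1\}$ iff block $m$ is contained in $\mathbf{f}'$. A pattern $\mathbf{f}$ at level $j+1$ is a (1-dimensional) preimage of a pattern $\mathbf{g}$ at level $j$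 if the image of $\mathbf{f}$ is $\mathbf{g}$. The 1-dimensional decoder applies $k$ successive reduction stages to a pattern at level $k$, ending with a pattern at level $0$ that is either empty or the loop edge; the original pattern is decoded correctly iff the final pattern is empty. (This is exactly the behaviour of the two-dimensional renormalisation decoder of the toric code on $\mathbb{Z}/2^k\times\mathbb{Z}/2^k$ restricted to errors supported on the horizontal line $\{(x,0)\}$, where being wrongly decoded means that error plus correction is that whole homologically non-trivial line.) *)

theory Defs
  imports Main
begin

text \<open>Line at level j: vertices 0..<2^j (representing Z/2^j), edge v (v < 2^j)
  joins v and (v+1) mod 2^j.  A pattern is a set of edge indices.\<close>

definition edges :: "nat \<Rightarrow> nat set" where
  "edges j = {..<2^j}"

text \<open>Number of incidences of vertex w with edges of f (a loop counts twice).\<close>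
definition incid :: "nat \<Rightarrow> nat set \<Rightarrow> nat \<Rightarrow> nat" where
  "incid j f w = card {v \<in> f. v = w} + card {v \<in> f. (v + 1) mod 2^j = w}"

definition syndrome :: "nat \<Rightarrow> nat set \<Rightarrow> nat set" where
  "syndrome j f = {w. w < 2^j \<and> odd (incid j f w)}"

text \<open>One reduction stage from level j+1 to level j.  Block m (m < 2^j) consists of
  left edge 2m = {2m,2m+1} and right edge 2m+1 = {2m+1, 2m+2}.\<close>
definition stage_A :: "nat \<Rightarrow> nat set \<Rightarrow> nat set" where
  "stage_A j f = {m. m < 2^j \<and> 2*m+1 \<in> syndrome (Suc j) f
                     \<and> (2*m+2) mod 2^(Suc j) \<in> syndrome (Suc j) f}"

definition stage_S1 :: "nat \<Rightarrow> nat set \<Rightarrow> nat set" where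
  "stage_S1 j f = syndrome (Suc j) f -
     (\<Union>m\<in>stage_A j f. {2*m+1, (2*m+2) mod 2^(Suc j)})"

definition stage_B :: "nat \<Rightarrow> nat set \<Rightarrow> nat set" where
  "stage_B j f = {m. m < 2^j \<and> 2*m+1 \<in> stage_S1 j f}"

definition symdiff :: "'a set \<Rightarrow> 'a set \<Rightarrow> 'a set" where
  "symdiff A B = (A - B) \<union> (B - A)"

text \<open>Flipping = adding mod 2 = symmetric difference.\<close>
definition stage_fprime :: "nat \<Rightarrow> nat set \<Rightarrow> nat set" where
  "stage_fprime j f =
     symdiff (symdiff f ((\<lambda>m. 2*m+1) ` stage_A j f)) ((\<lambda>m. 2*m) ` stage_B j f)"

definition image_stage :: "nat \<Rightarrow> nat set \<Rightarrow> nat set" where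
  "image_stage j f = {m. m < 2^j \<and> 2*m \<in> stage_fprime j f \<and> 2*m+1 \<in> stage_fprime j f}"

fun decode :: "nat \<Rightarrow> nat set \<Rightarrow> nat set" where
  "decode 0 f = f"
| "decode (Suc j) f = decode j (image_stage j f)"

definition decoded_correctly :: "nat \<Rightarrow> nat set \<Rightarrow> bool" where
  "decoded_correctly k f \<longleftrightarrow> decode k f = {}"

definition omega :: "nat \<Rightarrow> nat" where
  "omega k = (GREATEST w. \<forall>f. f \<subseteq> edges k \<and> card f \<le> w \<longrightarrow> decoded_correctly k f)"

fun u :: "nat \<Rightarrow> nat" where
  "u 0 = 0"
| "u (Suc 0) = 1"
| "u (Suc (Suc 0)) = 2"
| "u (Suc (Suc (Suc 0))) = 3"
| "u (Suc (Suc (Suc (Suc k)))) = 2 * u (Suc (Suc k))"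

end

theory Submission
  imports Defs
begin

definition maj :: "bool \<Rightarrow> bool \<Rightarrow> bool \<Rightarrow> bool" where
  "maj a b c = (a \<and> b \<or> a \<and> c \<or> b \<and> c)"

lemma suc_mod: "(v::nat) < N \<Longrightarrow> (v+1) mod N = (if v+1 = N then 0 else v+1)"
  by auto

lemma syn_lemma:
  assumes f: "f \<subseteq> {..<2^Suc j}" and p: "p < 2^Suc j"
  shows "((p+1) mod 2^Suc j \<in> syndrome (Suc j) f) \<longleftrightarrow> (((p+1) mod 2^Suc j \<in> f) \<noteq> (p \<in> f))"
proof -
  let ?N = "2^Suc j :: nat"
  let ?w = "(p+1) mod ?N"
  have w: "?w < ?N" by simp
  have s1: "{v \<in> f. v = ?w} = (if ?w \<in> f then {?w} else {})" by auto
  have s2: "{v \<in> f. (v + 1) mod ?N = ?w} = (if p \<in> f then {p} else {})"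
  proof -
    have "v = p" if "v \<in> f" "(v + 1) mod ?N = ?w" for v
    proof -
      have "v < ?N" using that f by auto
      then show ?thesis using that suc_mod[of v ?N] suc_mod[OF p] p
        by (auto split: if_splits)
    qed
    then show ?thesis by auto
  qed
  have "incid (Suc j) f ?w = (if ?w \<in> f then 1 else 0) + (if p \<in> f then 1 else 0)"
    unfolding incid_def s1 s2 by simp
  then show ?thesis unfolding syndrome_def using w by auto
qed

lemma par0: "2*(a::nat)+2 \<noteq> 2*b+1" by presburger
lemma par1: "\<forall>x::nat. x = 0 \<or> x = 2*m'+2 \<longrightarrow> x \<noteq> 2*m+1" using par0 by auto
lemma par2: "(2::nat)*m \<noteq> 2*x+1" by presburger

lemma mem_symdiff: "x \<in> symdiff A B \<longleftrightarrow> (x \<in> A) \<noteq> (x \<in> B)"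
  unfolding symdiff_def by auto

lemma image_maj:
  assumes f: "f \<subseteq> {..<2^Suc j}"
  shows "image_stage j f = {m. m < 2^j \<and> maj (2*m \<in> f) (2*m+1 \<in> f) ((2*m+2) mod 2^Suc j \<in> f)}"
proof -
  let ?N = "2^Suc j :: nat"
  let ?S = "syndrome (Suc j) f"
  have mid: "2*m+1 \<in> ?S \<longleftrightarrow> (2*m+1 \<in> f) \<noteq> (2*m \<in> f)" if "m < 2^j" for m
  proof -
    have p: "2*m < ?N" using that by simp
    have e: "(2*m+1) mod ?N = 2*m+1" using that by simp
    show ?thesis using syn_lemma[OF f p] e by simp
  qed
  have right: "(2*m+2) mod ?N \<in> ?S \<longleftrightarrow> ((2*m+2) mod ?N \<in> f) \<noteq> (2*m+1 \<in> f)" if "m < 2^j" for m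
  proof -
    have p: "2*m+1 < ?N" using that by simp
    have e: "2*m+1+1 = 2*m+2" by simp
    show ?thesis using syn_lemma[OF f p] unfolding e by simp
  qed
  have A: "m \<in> stage_A j f \<longleftrightarrow> m < 2^j \<and> ((2*m+1 \<in> f) \<noteq> (2*m \<in> f)) \<and> (((2*m+2) mod ?N \<in> f) \<noteq> (2*m+1 \<in> f))" for m
  proof (cases "m < 2^j")
    case True
    then show ?thesis unfolding stage_A_def mem_Collect_eq mid[OF True] right[OF True] by simp
  next
    case False
    then show ?thesis unfolding stage_A_def by simp
  qed
  have ev: "(2*m'+2) mod ?N \<noteq> 2*m+1" if "m' < 2^j" for m m'
  proof -
    have "2*m'+1 < ?N" using that by simp
    from suc_mod[OF this] have d: "(2*m'+2) mod ?N = 0 \<or> (2*m'+2) mod ?N = 2*m'+2" by auto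
    show ?thesis
    proof (rule disjE[OF d])
      assume "(2*m'+2) mod ?N = 0" then show ?thesis by simp
    next
      assume h: "(2*m'+2) mod ?N = 2*m'+2" show ?thesis unfolding h by (rule par0)
    qed
  qed
  have B: "m \<in> stage_B j f \<longleftrightarrow> m < 2^j \<and> 2*m+1 \<in> ?S \<and> m \<notin> stage_A j f" for m
  proof -
    have "(2*m+1 \<in> (\<Union>m\<in>stage_A j f. {2*m+1, (2*m+2) mod 2^(Suc j)})) \<longleftrightarrow> m \<in> stage_A j f"
    proof
      assume "2*m+1 \<in> (\<Union>m\<in>stage_A j f. {2*m+1, (2*m+2) mod 2^(Suc j)})"
      then obtain m' where m': "m' \<in> stage_A j f" "2*m+1 = 2*m'+1 \<or> 2*m+1 = (2*m'+2) mod 2^(Suc j)"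
        by blast
      have "m' < 2^j" using m'(1) unfolding stage_A_def by blast
      then have "2*m+1 \<noteq> (2*m'+2) mod 2^(Suc j)" using ev[of m' m] by metis
      then show "m \<in> stage_A j f" using m' by simp
    next
      assume "m \<in> stage_A j f"
      then show "2*m+1 \<in> (\<Union>m\<in>stage_A j f. {2*m+1, (2*m+2) mod 2^(Suc j)})" by blast
    qed
    then show ?thesis unfolding stage_B_def stage_S1_def by auto
  qed
  have fp0: "2*m \<in> stage_fprime j f \<longleftrightarrow> (2*m \<in> f) \<noteq> (m \<in> stage_B j f)" for m
  proof -
    have "\<And>x. 2*m \<noteq> 2*x+1" by (rule par2)
    then have "2*m \<notin> (\<lambda>m. 2*m+1) ` stage_A j f" by blast
    moreover have "2*m \<in> (\<lambda>m. 2*m) ` stage_B j f \<longleftrightarrow> m \<in> stage_B j f" by auto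
    ultimately show ?thesis unfolding stage_fprime_def mem_symdiff by blast
  qed
  have fp1: "2*m+1 \<in> stage_fprime j f \<longleftrightarrow> (2*m+1 \<in> f) \<noteq> (m \<in> stage_A j f)" for m
  proof -
    have "\<And>x. 2*m+1 \<noteq> 2*x" using par2 by metis
    then have "2*m+1 \<notin> (\<lambda>m. 2*m) ` stage_B j f" by blast
    moreover have "2*m+1 \<in> (\<lambda>m. 2*m+1) ` stage_A j f \<longleftrightarrow> m \<in> stage_A j f" by auto
    ultimately show ?thesis unfolding stage_fprime_def mem_symdiff by blast
  qed
  show ?thesis
  proof (rule set_eqI)
    fix m
    show "m \<in> image_stage j f \<longleftrightarrow> m \<in> {m. m < 2^j \<and> maj (2*m \<in> f) (2*m+1 \<in> f) ((2*m+2) mod 2^Suc j \<in> f)}"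
    proof (cases "m < 2^j")
      case True
      have "m \<in> image_stage j f \<longleftrightarrow> ((2*m \<in> f) \<noteq> (m \<in> stage_B j f)) \<and> ((2*m+1 \<in> f) \<noteq> (m \<in> stage_A j f))"
        unfolding image_stage_def fp0 fp1 using True by simp
      also have "\<dots> \<longleftrightarrow> maj (2*m \<in> f) (2*m+1 \<in> f) ((2*m+2) mod 2^Suc j \<in> f)"
        unfolding B A mid[OF True] maj_def using True by blast
      finally show ?thesis using True by simp
    next
      case False
      then show ?thesis unfolding image_stage_def by simp
    qed
  qed
qed

lemma card_as_sum:
  assumes "A \<subseteq> {..<n::nat}"
  shows "int (card A) = (\<Sum>i<n. of_bool (i \<in> A))"
proof -
  have "(\<Sum>i\<in>{..<n} \<inter> A. (1::int)) = (\<Sum>i<n. (of_bool (i \<in> A)::int))"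
    by (subst sum.inter_restrict) (auto simp: of_bool_def)
  also have "{..<n} \<inter> A = A" using assms by auto
  finally show ?thesis by simp
qed

lemma sum_blocks4:
  "(\<Sum>i<4*(M::nat). (F i::int)) = (\<Sum>m<M. F (4*m) + F (4*m+1) + F (4*m+2) + F (4*m+3))"
proof (induction M)
  case 0 then show ?case by simp
next
  case (Suc M)
  have e: "4 * Suc M = Suc (Suc (Suc (Suc (4*M))))" by simp
  have e3: "Suc (Suc (Suc (4*M))) = 4*M+3" by simp
  have "(\<Sum>i<4*Suc M. F i) = (\<Sum>i<4*M. F i) + F (4*M) + F (4*M+1) + F (4*M+2) + F (4*M+3)"
    unfolding e sum.lessThan_Suc by (simp add: e3)
  then show ?case using Suc by simp
qed

lemma sum_rot:
  assumes "(M::nat) > 0"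
  shows "(\<Sum>m<M. (P ((m+1) mod M)::int)) = (\<Sum>m<M. P m)"
proof -
  obtain K where K: "M = Suc K" using assms gr0_implies_Suc by blast
  have "(\<Sum>m<Suc K. P ((m+1) mod Suc K)) = (\<Sum>m<K. P ((m+1) mod Suc K)) + P 0"
    by simp
  also have "(\<Sum>m<K. P ((m+1) mod Suc K)) = (\<Sum>m<K. P (Suc m))"
    by (rule sum.cong) auto
  moreover have "(\<Sum>m<Suc K. P m) = P 0 + (\<Sum>m<K. P (Suc m))" by (rule sum.lessThan_Suc_shift)
  ultimately show ?thesis unfolding K by simp
qed

lemma window_ineq:
  "of_bool x0 + of_bool x1 + of_bool x2 + of_bool x3 + of_bool (\<not>x0 \<and> \<not>x1) - of_bool (\<not>x4 \<and> \<not>x5)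
    \<ge> (2::int) * of_bool (maj (maj x0 x1 x2) (maj x2 x3 x4) (maj x4 x5 x6))"
  by (cases x0; cases x1; cases x2; cases x3; cases x4; cases x5; cases x6) (simp_all add: maj_def)

lemma img_sub: "image_stage j f \<subseteq> {..<2^j}"
  unfolding image_stage_def by auto

lemma modwrap:
  assumes "N = 4*m+(4::nat)"
  shows "(4*m+4) mod N = 0" "(4*m+5) mod N = 1" "(4*m+6) mod N = 2"
proof -
  have a: "4*m+5 = N + 1" "4*m+6 = N+2" using assms by simp_all
  have b: "1 < N" "2 < N" using assms by simp_all
  show "(4*m+4) mod N = 0" using assms by simp
  show "(4*m+5) mod N = 1" unfolding a mod_add_self1 using b by simp
  show "(4*m+6) mod N = 2" unfolding a mod_add_self1 using b by simp
qed

lemma two_step: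
  assumes f: "f \<subseteq> {..<2^Suc (Suc j)}"
  shows "2 * card (image_stage j (image_stage (Suc j) f)) \<le> card f"
proof -
  define M :: nat where "M = 2^j"
  define N :: nat where "N = 2^Suc (Suc j)"
  have N: "N = 4*M" unfolding M_def N_def by simp
  have M0: "M > 0" unfolding M_def by simp
  define h where "h = image_stage (Suc j) f"
  define g where "g = image_stage j h"
  have hsub: "h \<subseteq> {..<2^Suc j}" unfolding h_def by (rule img_sub)
  have h_eq: "i \<in> h \<longleftrightarrow> i < 2*M \<and> maj (2*i \<in> f) (2*i+1 \<in> f) ((2*i+2) mod N \<in> f)" for i
    unfolding h_def image_maj[OF f] M_def N_def by simp
  have g_eq: "m \<in> g \<longleftrightarrow> m < M \<and> maj (2*m \<in> h) (2*m+1 \<in> h) ((2*m+2) mod (2*M) \<in> h)" for m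
    unfolding g_def image_maj[OF hsub] M_def by simp
  define X where "X m i = ((4*m+i) mod N \<in> f)" for m i
  define Psi :: "nat \<Rightarrow> int" where "Psi m = of_bool (4*m \<notin> f \<and> 4*m+1 \<notin> f)" for m
  have win: "of_bool (4*m \<in> f) + of_bool (4*m+1 \<in> f) + of_bool (4*m+2 \<in> f) + of_bool (4*m+3 \<in> f)
      + Psi m - Psi ((m+1) mod M) \<ge> 2 * of_bool (m \<in> g)" if m: "m < M" for m
  proof -
    have low: "(4*m+i) mod N = 4*m+i" if "i < 4" for i using m that N by simp
    have gX: "m \<in> g \<longleftrightarrow> maj (maj (X m 0) (X m 1) (X m 2)) (maj (X m 2) (X m 3) (X m 4)) (maj (X m 4) (X m 5) (X m 6))"
    proof -
      have a: "2*m \<in> h \<longleftrightarrow> maj (X m 0) (X m 1) (X m 2)"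
        unfolding h_eq X_def using m low[of 0] low[of 1] low[of 2] N by simp
      have b: "2*m+1 \<in> h \<longleftrightarrow> maj (X m 2) (X m 3) (X m 4)"
      proof -
        have e: "2*(2*m+1) = 4*m+2" "2*(2*m+1)+1 = 4*m+3" "2*(2*m+1)+2 = 4*m+4" by simp_all
        have l: "(4*m+2) mod N = 4*m+2" "(4*m+3) mod N = 4*m+3" using low[of 2] low[of 3] by simp_all
        have "2*m+1 < 2*M" using m by simp
        moreover have s: "4*m+3 = Suc(Suc(Suc(4*m)))" "4*m+4 = Suc(Suc(Suc(Suc(4*m))))" by simp_all
        ultimately show ?thesis unfolding h_eq X_def e l by (simp only: s) simp
      qed
      have c: "(2*m+2) mod (2*M) \<in> h \<longleftrightarrow> maj (X m 4) (X m 5) (X m 6)"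
      proof (cases "m+1 < M")
        case True
        have e: "(2*m+2) mod (2*M) = 2*m+2" using True by simp
        have e2: "2*(2*m+2) = 4*m+4" "2*(2*m+2)+1 = 4*m+5" "2*(2*m+2)+2 = 4*m+6" by simp_all
        have l: "(4*m+4) mod N = 4*m+4" "(4*m+5) mod N = 4*m+5" "(4*m+6) mod N = 4*m+6"
          using True N by simp_all
        have "2*m+2 < 2*M" using True by simp
        then show ?thesis unfolding e h_eq unfolding e2(2) e2(3) unfolding e2(1) unfolding X_def l by simp
      next
        case False
        then have mM: "M = m+1" using m by simp
        have e: "(2*m+2) mod (2*M) = 0" using mM by simp
        have l: "(4*m+4) mod N = 0" "(4*m+5) mod N = 1" "(4*m+6) mod N = 2"
          using modwrap[of N m] mM N by simp_all
        have l2: "(2*(0::nat)+2) mod N = 2" using mM N by simp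
        have "0 < 2*M" using mM by simp
        then show ?thesis unfolding e h_eq unfolding l2 unfolding X_def l by simp
      qed
      show ?thesis unfolding g_eq a b c using m by simp
    qed
    have psi2: "Psi ((m+1) mod M) = of_bool (\<not> X m 4 \<and> \<not> X m 5)"
    proof (cases "m+1 < M")
      case True
      have l: "(4*m+4) mod N = 4*m+4" "(4*m+5) mod N = 4*m+5"
        using True N by simp_all
      have e: "4*(m+1) = 4*m+4" "4*(m+1)+1 = 4*m+5" by simp_all
      show ?thesis unfolding Psi_def X_def l using True e by (simp add: add.commute)
    next
      case False
      then have mM: "M = m+1" using m by simp
      have l: "(4*m+4) mod N = 0" "(4*m+5) mod N = 1"
        using modwrap[of N m] mM N by simp_all
      show ?thesis unfolding Psi_def X_def l using mM by simp
    qed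
    have psi1: "Psi m = of_bool (\<not> X m 0 \<and> \<not> X m 1)"
      unfolding Psi_def X_def using low[of 0] low[of 1] by simp
    have xs: "X m 0 = (4*m \<in> f)" "X m 1 = (4*m+1 \<in> f)" "X m 2 = (4*m+2 \<in> f)" "X m 3 = (4*m+3 \<in> f)"
      unfolding X_def using low[of 0] low[of 1] low[of 2] low[of 3] by simp_all
    show ?thesis unfolding gX psi1 psi2 xs[symmetric] by (rule window_ineq)
  qed
  have gsub: "g \<subseteq> {..<M}" unfolding g_def M_def by (rule img_sub)
  have fsub: "f \<subseteq> {..<4*M}" using f N N_def by simp
  have "int (2 * card g) = (\<Sum>m<M. 2 * of_bool (m \<in> g))"
    using card_as_sum[OF gsub] by (simp add: sum_distrib_left)
  also have "\<dots> \<le> (\<Sum>m<M. of_bool (4*m \<in> f) + of_bool (4*m+1 \<in> f) + of_bool (4*m+2 \<in> f) + of_bool (4*m+3 \<in> f)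
      + Psi m - Psi ((m+1) mod M))"
    by (rule sum_mono) (use win in auto)
  also have "\<dots> = (\<Sum>m<M. of_bool (4*m \<in> f) + of_bool (4*m+1 \<in> f) + of_bool (4*m+2 \<in> f) + of_bool (4*m+3 \<in> f))
      + (\<Sum>m<M. Psi m) - (\<Sum>m<M. Psi ((m+1) mod M))"
    by (simp add: sum.distrib sum_subtractf)
  also have "\<dots> = (\<Sum>i<4*M. of_bool (i \<in> f))"
    using sum_rot[OF M0, of Psi] sum_blocks4[of "\<lambda>i. of_bool (i \<in> f)" M] by simp
  also have "\<dots> = int (card f)" using card_as_sum[OF fsub] by simp
  finally show ?thesis unfolding g_def h_def by simp
qed

lemma decode_SS: "decode (Suc (Suc j)) f = decode j (image_stage j (image_stage (Suc j) f))"
  by simp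

lemma image_mono:
  assumes "f \<subseteq> f'" "f' \<subseteq> {..<2^Suc j}"
  shows "image_stage j f \<subseteq> image_stage j f'"
proof -
  have f: "f \<subseteq> {..<2^Suc j}" using assms by blast
  show ?thesis unfolding image_maj[OF f] image_maj[OF assms(2)] maj_def using assms(1) by blast
qed

lemma decode_mono:
  "f \<subseteq> f' \<Longrightarrow> f' \<subseteq> edges k \<Longrightarrow> decode k f \<subseteq> decode k f'"
proof (induction k arbitrary: f f')
  case 0 then show ?case by simp
next
  case (Suc k)
  have "image_stage k f \<subseteq> image_stage k f'"
    using Suc.prems by (intro image_mono) (auto simp: edges_def)
  moreover have "image_stage k f' \<subseteq> edges k" unfolding edges_def by (rule img_sub)
  ultimately show ?case using Suc.IH by simp
qed

lemma image_empty: "image_stage j {} = {}"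
  using image_maj[of "{}" j] by (simp add: maj_def)

lemma decode_empty: "decode k {} = {}"
  by (induction k) (simp_all add: image_empty)

lemma bool3:
  "maj (maj x0 x1 x2) (maj x2 x3 x4) (maj x4 x5 x6) \<Longrightarrow>
   (3::int) \<le> of_bool x0 + of_bool x1 + of_bool x2 + of_bool x3 + of_bool x4 + of_bool x5 + of_bool x6"
  by (cases x0; cases x1; cases x2; cases x3; cases x4; cases x5; cases x6) (simp_all add: maj_def)

lemma level3:
  assumes f: "f \<subseteq> edges 3" and d: "decode 3 f \<noteq> {}"
  shows "3 \<le> card f"
proof -
  have f8: "f \<subseteq> {..<2^Suc 2}" using f by (simp add: edges_def)
  define h where "h = image_stage 2 f"
  define e where "e = image_stage 1 h"
  have h4: "h \<subseteq> {..<2^Suc 1}" unfolding h_def using img_sub[of 2 f] by simp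
  have e2: "e \<subseteq> {..<2^Suc 0}" unfolding e_def using img_sub[of 1 h] by simp
  have dd: "decode 3 f = image_stage 0 e"
    unfolding e_def h_def by (simp add: numeral_3_eq_3 numeral_2_eq_2)
  have "0 \<in> e" using d unfolding dd image_maj[OF e2] maj_def by auto
  then have "maj (0 \<in> h) (1 \<in> h) (2 \<in> h)"
    unfolding e_def image_maj[OF h4] by (simp add: numeral_2_eq_2)
  moreover have "0 \<in> h \<longleftrightarrow> maj (0 \<in> f) (1 \<in> f) (2 \<in> f)"
    unfolding h_def image_maj[OF f8] by (simp add: numeral_2_eq_2)
  moreover have "1 \<in> h \<longleftrightarrow> maj (2 \<in> f) (3 \<in> f) (4 \<in> f)"
    unfolding h_def image_maj[OF f8] by simp
  moreover have "2 \<in> h \<longleftrightarrow> maj (4 \<in> f) (5 \<in> f) (6 \<in> f)"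
    unfolding h_def image_maj[OF f8] by simp
  ultimately have "maj (maj (0 \<in> f) (1 \<in> f) (2 \<in> f)) (maj (2 \<in> f) (3 \<in> f) (4 \<in> f)) (maj (4 \<in> f) (5 \<in> f) (6 \<in> f))"
    by simp
  from bool3[OF this] have "3 \<le> (\<Sum>i<7. (of_bool (i \<in> f)::int))"
    by (simp add: eval_nat_numeral)
  also have "\<dots> \<le> (\<Sum>i<8. of_bool (i \<in> f))"
    by (rule sum_mono2) auto
  also have "\<dots> = int (card f)" using card_as_sum[of f 8] f8 by simp
  finally show ?thesis by simp
qed

lemma u_SS: "j \<ge> 2 \<Longrightarrow> u (Suc (Suc j)) = 2 * u j"
proof -
  assume "j \<ge> 2"
  then obtain i where "j = Suc (Suc i)" by (metis add_2_eq_Suc le_Suc_ex)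
  then show ?thesis by simp
qed

lemma lower_bound:
  "k \<ge> 1 \<Longrightarrow> f \<subseteq> edges k \<Longrightarrow> decode k f \<noteq> {} \<Longrightarrow> u k \<le> card f"
proof (induction k arbitrary: f rule: less_induct)
  case (less k)
  have fin: "finite f" using less.prems(2) unfolding edges_def using finite_subset by blast
  consider "k = 1" | "k = 2" | "k = 3" | j where "k = Suc (Suc j)" "j \<ge> 2"
    using less.prems(1) by (metis One_nat_def Suc_le_eq add_2_eq_Suc le_Suc_ex le_antisym not_less_eq_eq numeral_3_eq_3 numeral_2_eq_2)
  then show ?case
  proof cases
    case 1
    then have "f \<noteq> {}" using less.prems(3) decode_empty by metis
    then show ?thesis using fin 1 by (simp add: card_gt_0_iff Suc_le_eq)
  next
    case 2
    define g where "g = image_stage 0 (image_stage (Suc 0) f)"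
    have f4: "f \<subseteq> {..<2^Suc (Suc 0)}" using less.prems(2) 2 by (simp add: edges_def)
    have "g \<noteq> {}" using less.prems(3) 2 unfolding g_def by (simp add: numeral_2_eq_2)
    moreover have "finite g" unfolding g_def by (rule finite_subset[OF img_sub]) simp
    ultimately have "1 \<le> card g" by (simp add: card_gt_0_iff Suc_le_eq)
    moreover have "2 * card g \<le> card f" unfolding g_def by (rule two_step[OF f4])
    moreover have "u 2 = 2" by (simp add: numeral_2_eq_2)
    ultimately show ?thesis using 2 by simp
  next
    case 3
    moreover have "u 3 = 3" by (simp add: numeral_3_eq_3)
    ultimately show ?thesis using level3 less.prems by simp
  next
    case 4
    define g where "g = image_stage j (image_stage (Suc j) f)"
    have f4: "f \<subseteq> {..<2^Suc (Suc j)}" using less.prems(2) 4 by (simp add: edges_def)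
    have "decode j g \<noteq> {}" using less.prems(3) 4 unfolding g_def by simp
    moreover have "g \<subseteq> edges j" unfolding g_def edges_def by (rule img_sub)
    ultimately have "u j \<le> card g" using less.IH[of j g] 4 by simp
    moreover have "2 * card g \<le> card f" unfolding g_def by (rule two_step[OF f4])
    ultimately show ?thesis using 4 u_SS by simp
  qed
qed

lemma mem12: "f \<subseteq> {..<2^Suc j} \<Longrightarrow> m < 2^j \<Longrightarrow> 2*m \<in> f \<Longrightarrow> 2*m+1 \<in> f \<Longrightarrow> m \<in> image_stage j f"
  using image_maj[of f j] unfolding maj_def by blast
lemma mem13: "f \<subseteq> {..<2^Suc j} \<Longrightarrow> m < 2^j \<Longrightarrow> 2*m \<in> f \<Longrightarrow> (2*m+2) mod 2^Suc j \<in> f \<Longrightarrow> m \<in> image_stage j f"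
  using image_maj[of f j] unfolding maj_def by blast
lemma mem23: "f \<subseteq> {..<2^Suc j} \<Longrightarrow> m < 2^j \<Longrightarrow> 2*m+1 \<in> f \<Longrightarrow> (2*m+2) mod 2^Suc j \<in> f \<Longrightarrow> m \<in> image_stage j f"
  using image_maj[of f j] unfolding maj_def by blast

lemma pair_gadget:
  assumes F: "F \<subseteq> {..<2^Suc (Suc j)}" and G: "{4*a+3, 4*a+4, 4*a+6, 4*a+7} \<subseteq> F"
    and a: "a + 2 \<le> 2^j"
  shows "{a, a+1} \<subseteq> image_stage j (image_stage (Suc j) F)"
proof -
  let ?h = "image_stage (Suc j) F"
  have hs: "?h \<subseteq> {..<2^Suc j}" by (rule img_sub)
  have N: "(2^Suc (Suc j)::nat) = 4 * 2^j" by simp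
  have e1: "2*(2*a+1)+1 = 4*a+3" "(2*(2*a+1)+2) mod 2^Suc (Suc j) = 4*a+4" using a N by simp_all
  have h1: "2*a+1 \<in> ?h"
    apply (rule mem23[OF F]) using a apply simp unfolding e1(2) unfolding e1(1) using G by blast+
  have e2: "2*(2*a+2) = 4*a+4" "(2*(2*a+2)+2) mod 2^Suc (Suc j) = 4*a+6" using a N by simp_all
  have h2: "2*a+2 \<in> ?h"
    apply (rule mem13[OF F]) using a apply simp unfolding e2(2) unfolding e2(1) using G by blast+
  have e3: "2*(2*a+3) = 4*a+6" "2*(2*a+3)+1 = 4*a+7" by simp_all
  have h3: "2*a+3 \<in> ?h"
    apply (rule mem12[OF F]) using a apply simp unfolding e3(2) unfolding e3(1) using G by blast+
  have e4: "(2*a+2) mod 2^Suc j = 2*a+2" using a by simp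
  have g0: "a \<in> image_stage j ?h"
    apply (rule mem23[OF hs]) using a apply simp unfolding e4 using h1 h2 by blast+
  have e5: "2*(a+1) = 2*a+2" "2*(a+1)+1 = 2*a+3" by simp_all
  have g1: "a+1 \<in> image_stage j ?h"
    apply (rule mem12[OF hs]) using a apply simp unfolding e5(2) unfolding e5(1) using h2 h3 by blast+
  show ?thesis using g0 g1 by simp
qed

lemma triple_gadget:
  assumes F: "F \<subseteq> {..<2^Suc (Suc j)}" and G: "{4*a+3, 4*a+4, 4*a+5, 4*a+9, 4*a+10, 4*a+11} \<subseteq> F"
    and a: "a + 3 \<le> 2^j"
  shows "{a, a+1, a+2} \<subseteq> image_stage j (image_stage (Suc j) F)"
proof -
  let ?h = "image_stage (Suc j) F"
  have hs: "?h \<subseteq> {..<2^Suc j}" by (rule img_sub)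
  have N: "(2^Suc (Suc j)::nat) = 4 * 2^j" by simp
  have e1: "2*(2*a+1)+1 = 4*a+3" "(2*(2*a+1)+2) mod 2^Suc (Suc j) = 4*a+4" using a N by simp_all
  have h1: "2*a+1 \<in> ?h"
    apply (rule mem23[OF F]) using a apply simp unfolding e1(2) unfolding e1(1) using G by blast+
  have e2: "2*(2*a+2) = 4*a+4" "2*(2*a+2)+1 = 4*a+5" by simp_all
  have h2: "2*a+2 \<in> ?h"
    apply (rule mem12[OF F]) using a apply simp unfolding e2(2) unfolding e2(1) using G by blast+
  have e3: "2*(2*a+4)+1 = 4*a+9" "(2*(2*a+4)+2) mod 2^Suc (Suc j) = 4*a+10" using a N by simp_all
  have h4: "2*a+4 \<in> ?h"
    apply (rule mem23[OF F]) using a apply simp unfolding e3(2) unfolding e3(1) using G by blast+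
  have e4: "2*(2*a+5) = 4*a+10" "2*(2*a+5)+1 = 4*a+11" by simp_all
  have h5: "2*a+5 \<in> ?h"
    apply (rule mem12[OF F]) using a apply simp unfolding e4(2) unfolding e4(1) using G by blast+
  have e5: "(2*a+2) mod 2^Suc j = 2*a+2" using a by simp
  have g0: "a \<in> image_stage j ?h"
    apply (rule mem23[OF hs]) using a apply simp unfolding e5 using h1 h2 by blast+
  have e6: "2*(a+1) = 2*a+2" "(2*(a+1)+2) mod 2^Suc j = 2*a+4" using a by simp_all
  have g1: "a+1 \<in> image_stage j ?h"
    apply (rule mem13[OF hs]) using a apply simp unfolding e6(2) unfolding e6(1) using h2 h4 by blast+
  have e7: "2*(a+2) = 2*a+4" "2*(a+2)+1 = 2*a+5" by simp_all
  have g2: "a+2 \<in> image_stage j ?h"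
    apply (rule mem12[OF hs]) using a apply simp unfolding e7(2) unfolding e7(1) using h4 h5 by blast+
  show ?thesis using g0 g1 g2 by simp
qed

fun SP :: "nat \<Rightarrow> nat set" where
  "SP 0 = {0}"
| "SP (Suc n) = (\<lambda>a. 4*a+3) ` SP n \<union> (\<lambda>a. 4*a+6) ` SP n"

fun ST :: "nat \<Rightarrow> nat set" where
  "ST 0 = {1}"
| "ST (Suc n) = (\<lambda>a. 4*a+3) ` ST n \<union> (\<lambda>a. 4*a+9) ` ST n"

definition PP :: "nat \<Rightarrow> nat set" where "PP n = (\<Union>a\<in>SP n. {a, a+1})"
definition TP :: "nat \<Rightarrow> nat set" where "TP n = (\<Union>a\<in>ST n. {a, a+1, a+2})"

lemma SP_fin: "finite (SP n)" by (induction n) auto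
lemma ST_fin: "finite (ST n)" by (induction n) auto

lemma SP_card: "card (SP n) \<le> 2^n"
proof (induction n)
  case 0 then show ?case by simp
next
  case (Suc n)
  have "card (SP (Suc n)) \<le> card ((\<lambda>a. 4*a+3) ` SP n) + card ((\<lambda>a. 4*a+6) ` SP n)"
    by (simp add: card_Un_le)
  also have "\<dots> \<le> card (SP n) + card (SP n)" by (intro add_mono card_image_le SP_fin)
  finally show ?case using Suc by simp
qed

lemma ST_card: "card (ST n) \<le> 2^n"
proof (induction n)
  case 0 then show ?case by simp
next
  case (Suc n)
  have "card (ST (Suc n)) \<le> card ((\<lambda>a. 4*a+3) ` ST n) + card ((\<lambda>a. 4*a+9) ` ST n)"
    by (simp add: card_Un_le)
  also have "\<dots> \<le> card (ST n) + card (ST n)" by (intro add_mono card_image_le ST_fin)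
  finally show ?case using Suc by simp
qed

lemma SP_bound: "a \<in> SP n \<Longrightarrow> a + 2 \<le> 2^(2*n+1)"
proof (induction n arbitrary: a)
  case 0 then show ?case by simp
next
  case (Suc n)
  then obtain b where b: "b \<in> SP n" "a = 4*b+3 \<or> a = 4*b+6" by auto
  have "b + 2 \<le> 2^(2*n+1)" using Suc.IH b(1) by simp
  then have "4*(b+2) \<le> 4*2^(2*n+1)" by simp
  moreover have "(4::nat)*2^(2*n+1) = 2^(2*Suc n+1)" by (simp add: power_add)
  ultimately show ?case using b(2) by auto
qed

lemma ST_bound: "a \<in> ST n \<Longrightarrow> a + 3 \<le> 2^(2*n+2)"
proof (induction n arbitrary: a)
  case 0 then show ?case by simp
next
  case (Suc n)
  then obtain b where b: "b \<in> ST n" "a = 4*b+3 \<or> a = 4*b+9" by auto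
  have "b + 3 \<le> 2^(2*n+2)" using Suc.IH b(1) by simp
  then have "4*(b+3) \<le> 4*2^(2*n+2)" by simp
  moreover have "(4::nat)*2^(2*n+2) = 2^(2*Suc n+2)" by (simp add: power_add)
  ultimately show ?case using b(2) by auto
qed

lemma PP_card: "card (PP n) \<le> 2^(n+1)"
proof -
  have "card (PP n) \<le> (\<Sum>a\<in>SP n. card {a, a+1})" unfolding PP_def by (rule card_UN_le[OF SP_fin])
  also have "\<dots> = 2 * card (SP n)" by simp
  also have "\<dots> \<le> 2^(n+1)" using SP_card[of n] by simp
  finally show ?thesis .
qed

lemma TP_card: "card (TP n) \<le> 3 * 2^n"
proof -
  have "card (TP n) \<le> (\<Sum>a\<in>ST n. card {a, a+1, a+2})" unfolding TP_def by (rule card_UN_le[OF ST_fin])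
  also have "\<dots> = 3 * card (ST n)" by simp
  also have "\<dots> \<le> 3 * 2^n" using ST_card[of n] by simp
  finally show ?thesis .
qed

lemma PP_sub: "PP n \<subseteq> edges (2*n+2)"
proof
  fix x assume "x \<in> PP n"
  then obtain a where a: "a \<in> SP n" "x = a \<or> x = a+1" unfolding PP_def by auto
  have "a + 2 \<le> 2^(2*n+1)" by (rule SP_bound[OF a(1)])
  moreover have "(2::nat)^(2*n+1) < 2^(2*n+2)" by simp
  ultimately show "x \<in> edges (2*n+2)" using a(2) unfolding edges_def by auto
qed

lemma TP_sub: "TP n \<subseteq> edges (2*n+3)"
proof
  fix x assume "x \<in> TP n"
  then obtain a where a: "a \<in> ST n" "x = a \<or> x = a+1 \<or> x = a+2" unfolding TP_def by auto
  have "a + 3 \<le> 2^(2*n+2)" by (rule ST_bound[OF a(1)])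
  moreover have "(2::nat)^(2*n+2) < 2^(2*n+3)" by (rule power_strict_increasing) auto
  ultimately show "x \<in> edges (2*n+3)" using a(2) unfolding edges_def by auto
qed

lemma PP_step: "PP n \<subseteq> image_stage (2*n+2) (image_stage (Suc (2*n+2)) (PP (Suc n)))"
proof
  fix x assume "x \<in> PP n"
  then obtain a where a: "a \<in> SP n" "x = a \<or> x = a+1" unfolding PP_def by auto
  have F: "PP (Suc n) \<subseteq> {..<2^Suc (Suc (2*n+2))}" using PP_sub[of "Suc n"] by (simp add: edges_def)
  have G: "{4*a+3, 4*a+4, 4*a+6, 4*a+7} \<subseteq> PP (Suc n)" using a(1) unfolding PP_def by force
  have b: "a + 2 \<le> 2^(2*n+2)" using SP_bound[OF a(1)] by (simp add: le_trans)
  show "x \<in> image_stage (2*n+2) (image_stage (Suc (2*n+2)) (PP (Suc n)))"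
    using pair_gadget[OF F G b] a(2) by auto
qed

lemma TP_step: "TP n \<subseteq> image_stage (2*n+3) (image_stage (Suc (2*n+3)) (TP (Suc n)))"
proof
  fix x assume "x \<in> TP n"
  then obtain a where a: "a \<in> ST n" "x = a \<or> x = a+1 \<or> x = a+2" unfolding TP_def by auto
  have F: "TP (Suc n) \<subseteq> {..<2^Suc (Suc (2*n+3))}" using TP_sub[of "Suc n"] by (simp add: edges_def)
  have G: "{4*a+3, 4*a+4, 4*a+5, 4*a+9, 4*a+10, 4*a+11} \<subseteq> TP (Suc n)" using a(1) unfolding TP_def by force
  have "(2::nat)^(2*n+2) \<le> 2^(2*n+3)" by (rule power_increasing) auto
  then have b: "a + 3 \<le> 2^(2*n+3)" using ST_bound[OF a(1)] by linarith
  show "x \<in> image_stage (2*n+3) (image_stage (Suc (2*n+3)) (TP (Suc n)))"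
    using triple_gadget[OF F G b] a(2) by auto
qed

lemma PP_fail: "decode (2*n+2) (PP n) \<noteq> {}"
proof (induction n)
  case 0
  have P: "PP 0 = {0, 1}" unfolding PP_def by simp
  have F: "PP 0 \<subseteq> {..<2^Suc 1}" unfolding P by auto
  have h: "0 \<in> image_stage 1 (PP 0)" by (rule mem12[OF F]) (simp_all add: P)
  have hs: "image_stage 1 (PP 0) \<subseteq> {..<2^Suc 0}" using img_sub[of 1 "PP 0"] by simp
  have "0 \<in> image_stage 0 (image_stage 1 (PP 0))" by (rule mem13[OF hs]) (use h in simp_all)
  then show ?case by (simp add: numeral_2_eq_2, blast)
next
  case (Suc n)
  have e: "2 * Suc n + 2 = Suc (Suc (2*n+2))" by simp
  have "decode (2*n+2) (PP n) \<subseteq> decode (2*n+2) (image_stage (2*n+2) (image_stage (Suc (2*n+2)) (PP (Suc n))))"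
    by (rule decode_mono[OF PP_step]) (unfold edges_def, rule img_sub)
  then show ?case unfolding e decode_SS using Suc.IH by blast
qed

lemma TP_fail: "decode (2*n+3) (TP n) \<noteq> {}"
proof (induction n)
  case 0
  have P: "TP 0 = {1, 2, 3}" unfolding TP_def by (simp add: numeral_3_eq_3 numeral_2_eq_2)
  have F: "TP 0 \<subseteq> {..<2^Suc 2}" unfolding P by auto
  have h0: "0 \<in> image_stage 2 (TP 0)" by (rule mem23[OF F]) (simp_all add: P)
  have h1: "1 \<in> image_stage 2 (TP 0)" by (rule mem12[OF F]) (simp_all add: P)
  have hs: "image_stage 2 (TP 0) \<subseteq> {..<2^Suc 1}" using img_sub[of 2 "TP 0"] by simp
  have e0: "0 \<in> image_stage 1 (image_stage 2 (TP 0))" by (rule mem12[OF hs]) (use h0 h1 in simp_all)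
  have es: "image_stage 1 (image_stage 2 (TP 0)) \<subseteq> {..<2^Suc 0}" using img_sub[of 1] by simp
  have "0 \<in> image_stage 0 (image_stage 1 (image_stage 2 (TP 0)))" by (rule mem13[OF es]) (use e0 in simp_all)
  then show ?case by (simp add: numeral_3_eq_3 numeral_2_eq_2, blast)
next
  case (Suc n)
  have e: "2 * Suc n + 3 = Suc (Suc (2*n+3))" by simp
  have "decode (2*n+3) (TP n) \<subseteq> decode (2*n+3) (image_stage (2*n+3) (image_stage (Suc (2*n+3)) (TP (Suc n))))"
    by (rule decode_mono[OF TP_step]) (unfold edges_def, rule img_sub)
  then show ?case unfolding e decode_SS using Suc.IH by blast
qed

lemma u_even: "u (2*n+2) = 2^(n+1)"
proof (induction n)
  case 0 then show ?case by (simp add: numeral_2_eq_2)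
next
  case (Suc n)
  have "u (2*Suc n+2) = u (Suc (Suc (2*n+2)))" by simp
  also have "\<dots> = 2 * u (2*n+2)" by (rule u_SS) simp
  finally show ?case using Suc by simp
qed

lemma u_odd: "u (2*n+3) = 3 * 2^n"
proof (induction n)
  case 0 then show ?case by (simp add: numeral_3_eq_3)
next
  case (Suc n)
  have "u (2*Suc n+3) = u (Suc (Suc (2*n+3)))" by simp
  also have "\<dots> = 2 * u (2*n+3)" by (rule u_SS) simp
  finally show ?case using Suc by simp
qed

lemma failing: "k \<ge> 1 \<Longrightarrow> \<exists>F. F \<subseteq> edges k \<and> card F \<le> u k \<and> decode k F \<noteq> {}"
proof -
  assume k: "k \<ge> 1"
  have "k = 1 \<or> (\<exists>n. k = 2*n+2) \<or> (\<exists>n. k = 2*n+3)" using k by presburger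
  then show ?thesis
  proof (elim disjE exE)
    assume k1: "k = 1"
    have F: "{0::nat} \<subseteq> {..<2^Suc 0}" by simp
    have "0 \<in> image_stage 0 {0}" by (rule mem13[OF F]) simp_all
    then have "decode 1 {0} \<noteq> {}" by auto
    then show ?thesis using k1 by (intro exI[of _ "{0}"]) (simp add: edges_def)
  next
    fix n assume kn: "k = 2*n+2"
    show ?thesis using kn PP_sub[of n] PP_card[of n] PP_fail[of n] u_even[of n]
      by (intro exI[of _ "PP n"]) simp
  next
    fix n assume kn: "k = 2*n+3"
    show ?thesis using kn TP_sub[of n] TP_card[of n] TP_fail[of n] u_odd[of n]
      by (intro exI[of _ "TP n"]) simp
  qed
qed

theorem proposition4:
  fixes k :: nat
  assumes "k \<ge> 1"
  shows "omega k = u k - 1"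
proof -
  obtain F where F: "F \<subseteq> edges k" "card F \<le> u k" "decode k F \<noteq> {}"
    using failing[OF assms] by blast
  have finF: "finite F" using F(1) unfolding edges_def using finite_subset by blast
  have "F \<noteq> {}" using F(3) decode_empty by metis
  then have "card F \<ge> 1" using finF by (simp add: card_gt_0_iff Suc_le_eq)
  then have u1: "u k \<ge> 1" using F(2) by simp
  let ?P = "\<lambda>w. \<forall>f. f \<subseteq> edges k \<and> card f \<le> w \<longrightarrow> decoded_correctly k f"
  have P: "?P (u k - 1)"
  proof (intro allI impI)
    fix f assume f: "f \<subseteq> edges k \<and> card f \<le> u k - 1"
    show "decoded_correctly k f"
    proof (rule ccontr)
      assume "\<not> decoded_correctly k f"
      then have "decode k f \<noteq> {}" unfolding decoded_correctly_def by simp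
      then have "u k \<le> card f" using lower_bound assms f by blast
      then show False using f u1 by linarith
    qed
  qed
  have G: "y \<le> u k - 1" if "?P y" for y
  proof (rule ccontr)
    assume "\<not> y \<le> u k - 1"
    then have "card F \<le> y" using F(2) by simp
    then have "decoded_correctly k F" using that F(1) by blast
    then show False using F(3) unfolding decoded_correctly_def by simp
  qed
  show ?thesis unfolding omega_def
  proof (rule Greatest_equality)
    show "?P (u k - 1)" by (rule P)
  next
    fix y assume "?P y" then show "y \<le> u k - 1" by (rule G)
  qed
qed

end
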